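(* Let $\Sigma$ be a signature containing two non-rigid constant symbols $a$ and $b$, and let $M=(W,D,I)$ be a full id-model for $\Sigma$. Then $$M\models\eta \iff D \text{ is finite},$$ where $\eta := \big(\mathrm{dep}(a,b)\wedge \mathrm{dep}(b,a)\wedge \exists^{\mathsf i}x\,(x\neq b)\big)\to \exists^{\mathsf i}x\,(x\neq a)$.
   Context: Inquisitive first-order logic InqBQ. A signature consists of predicate symbols and function symbols, each with an arity; function symbols are either rigid or non-rigid, and function symbols of arity $0$ are constant symbols. Terms are built from variables and function symbols as usual. Formulas are given by $\phi ::= P(t_1,\dots,t_n)\mid (t=t')\mid \bot\mid (\phi\wedge\phi)\mid(\phi\mathbin{\vee\!\!\!\vee}\phi)\mid(\phi\to\phi)\mid\forall x\phi\mid\exists^{\mathsf i}x\phi$, where $\mathbin{\vee\!\!\!\vee}$ is inquisitive disjunction and $\exists^{\mathsf i}$ is the inquisitive existential quantifier. Abbreviations: $\neg\phi:=\phi\to\bot$, $(t\neq t'):=\neg(t=t')$, $?\phi:=\phi\mathbin{\vee\!\!\!\vee}\neg\phi$. Formulas without $\mathbin{\vee\!\!\!\vee}$ and $\exists^{\mathsf i}$ are called classical. An id-model is a triple $M=(W,D,I)$ with $W$ a non-empty set of worlds, $D$ a non-empty domain, and $I$ assigning to each world $w$ an interpretation $I_w$ giving each $n$-ary predicate $P$ a relation $P_w\subseteq D^n$ and each $n$-ary function symbol $f$ a function $f_w:D^n\to D$ (rigid symbols get the same interpretation at every world); equality is interpreted as identity on $D$ at every world. Term values $[t]^g_w$ are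 defined as usual. Support of a formula at a state $s\subseteq W$ under an assignment $g$: $M,s\models_g P(t_1,\dots,t_n)$ iff $([t_1]^g_w,\dots,[t_n]^g_w)\in P_w$ for all $w\in s$; $M,s\models_g t=t'$ iff $[t]^g_w=[t']^g_w$ for all $w\in s$; $M,s\models_g\bot$ iff $s=\emptyset$; $\wedge$ is conjunction of support; $M,s\models_g\phi\mathbin{\vee\!\!\!\vee}\psi$ iff $M,s\models_g\phi$ or $M,s\models_g\psi$; $M,s\models_g\phi\to\psi$ iff for every $t\subseteq s$, $M,t\models_g\phi$ implies $M,t\models_g\psi$; $M,s\models_g\forall x\phi$ iff $M,s\models_{g[x\mapsto d]}\phi$ for all $d\in D$; $M,s\models_g\exists^{\mathsf i}x\phi$ iff $M,s\models_{g[x\mapsto d]}\phi$ for some $d\in D$. For a sentence $\phi$, $M\models\phi$ means $M,W\models\phi$. For a term $t$, $\lambda t:=\exists^{\mathsf i}x\,(x=t)$ with $x$ a variable not occurring in $t$, and $\mathrm{dep}(t,t'):=\lambda t\to\lambda t'$. For an id-model over a signature containing non-rigid constants $a,b$ and a state $s\subseteq W$, let $R_s=\{(a_w,b_w)\mid w\in s\}\subseteq D^2$. The model is full if $R_W=D^2$. *)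

theory Defs
  imports Main
begin

datatype 'f trm = Var nat | Fn 'f "'f trm list"

datatype ('p, 'f) form =
    Pred 'p "'f trm list"
  | Eq "'f trm" "'f trm"
  | Bot
  | Conj "('p, 'f) form" "('p, 'f) form"
  | IDisj "('p, 'f) form" "('p, 'f) form"
  | Imp "('p, 'f) form" "('p, 'f) form"
  | All nat "('p, 'f) form"
  | IEx nat "('p, 'f) form"

record ('p, 'f) signature =
  parity :: "'p \<Rightarrow> nat"
  farity :: "'f \<Rightarrow> nat"
  rigid :: "'f \<Rightarrow> bool"

record ('w, 'd, 'p, 'f) model =
  worlds :: "'w set"
  domain :: "'d set"
  fint :: "'w \<Rightarrow> 'f \<Rightarrow> 'd list \<Rightarrow> 'd"
  pint :: "'w \<Rightarrow> 'p \<Rightarrow> 'd list set"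

definition is_idmodel :: "('p, 'f) signature \<Rightarrow> ('w, 'd, 'p, 'f) model \<Rightarrow> bool" where
  "is_idmodel S M \<longleftrightarrow>
     worlds M \<noteq> {} \<and> domain M \<noteq> {} \<and>
     (\<forall>w\<in>worlds M. \<forall>f ds. length ds = farity S f \<and> set ds \<subseteq> domain M
          \<longrightarrow> fint M w f ds \<in> domain M) \<and>
     (\<forall>w\<in>worlds M. \<forall>p. pint M w p \<subseteq> {ds. length ds = parity S p \<and> set ds \<subseteq> domain M}) \<and>
     (\<forall>f. rigid S f \<longrightarrow> (\<forall>w\<in>worlds M. \<forall>w'\<in>worlds M. \<forall>ds.
          length ds = farity S f \<and> set ds \<subseteq> domain M \<longrightarrow> fint M w f ds = fint M w' f ds))"

fun tval :: "('w, 'd, 'p, 'f) model \<Rightarrow> 'w \<Rightarrow> (nat \<Rightarrow> 'd) \<Rightarrow> 'f trm \<Rightarrow> 'd" where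
  "tval M w g (Var x) = g x"
| "tval M w g (Fn f ts) = fint M w f (map (tval M w g) ts)"

primrec support :: "('w, 'd, 'p, 'f) model \<Rightarrow> ('p, 'f) form \<Rightarrow> 'w set \<Rightarrow> (nat \<Rightarrow> 'd) \<Rightarrow> bool" where
  "support M (Pred p ts) s g = (\<forall>w\<in>s. map (tval M w g) ts \<in> pint M w p)"
| "support M (Eq t t') s g = (\<forall>w\<in>s. tval M w g t = tval M w g t')"
| "support M Bot s g = (s = {})"
| "support M (Conj \<phi> \<psi>) s g = (support M \<phi> s g \<and> support M \<psi> s g)"
| "support M (IDisj \<phi> \<psi>) s g = (support M \<phi> s g \<or> support M \<psi> s g)"
| "support M (Imp \<phi> \<psi>) s g = (\<forall>t\<subseteq>s. support M \<phi> t g \<longrightarrow> support M \<psi> t g)"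
| "support M (All x \<phi>) s g = (\<forall>d\<in>domain M. support M \<phi> s (g(x := d)))"
| "support M (IEx x \<phi>) s g = (\<exists>d\<in>domain M. support M \<phi> s (g(x := d)))"

definition models :: "('w, 'd, 'p, 'f) model \<Rightarrow> ('p, 'f) form \<Rightarrow> bool" where
  "models M \<phi> \<longleftrightarrow> (\<forall>g. range g \<subseteq> domain M \<longrightarrow> support M \<phi> (worlds M) g)"

definition Neg :: "('p, 'f) form \<Rightarrow> ('p, 'f) form" where
  "Neg \<phi> = Imp \<phi> Bot"

definition Neq :: "'f trm \<Rightarrow> 'f trm \<Rightarrow> ('p, 'f) form" where
  "Neq t t' = Neg (Eq t t')"

fun tvars :: "'f trm \<Rightarrow> nat list" where
  "tvars (Var x) = [x]"
| "tvars (Fn f ts) = concat (map tvars ts)"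

definition fresh :: "'f trm \<Rightarrow> nat" where
  "fresh t = Suc (foldr max (tvars t) 0)"

definition lam :: "'f trm \<Rightarrow> ('p, 'f) form" where
  "lam t = IEx (fresh t) (Eq (Var (fresh t)) t)"

definition dep :: "'f trm \<Rightarrow> 'f trm \<Rightarrow> ('p, 'f) form" where
  "dep t t' = Imp (lam t) (lam t')"

text \<open>The formula eta, with x the variable 0 and a, b constant symbols.\<close>
definition eta :: "'f \<Rightarrow> 'f \<Rightarrow> ('p, 'f) form" where
  "eta a b = Imp (Conj (Conj (dep (Fn a []) (Fn b [])) (dep (Fn b []) (Fn a [])))
                        (IEx 0 (Neq (Var 0) (Fn b []))))
                 (IEx 0 (Neq (Var 0) (Fn a [])))"

definition full :: "('w, 'd, 'p, 'f) model \<Rightarrow> 'f \<Rightarrow> 'f \<Rightarrow> bool" where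
  "full M a b \<longleftrightarrow>
     {(fint M w a [], fint M w b []) | w. w \<in> worlds M} = domain M \<times> domain M"

end

theory Submission
  imports Defs "HOL-Library.Equipollence"
begin

lemma lam_supp: "support M (lam (Fn c [])) t g \<longleftrightarrow> (\<exists>d\<in>domain M. \<forall>w\<in>t. d = fint M w c [])"
  by (simp add: lam_def fresh_def)

lemma neq_supp: "support M (IEx 0 (Neq (Var 0) (Fn c []))) s g \<longleftrightarrow> (\<exists>d\<in>domain M. \<forall>w\<in>s. d \<noteq> fint M w c [])"
proof -
  have "(\<forall>t\<subseteq>s. (\<forall>w\<in>t. d = fint M w c []) \<longrightarrow> t = {}) \<longleftrightarrow> (\<forall>w\<in>s. d \<noteq> fint M w c [])" for d
  proof
    assume H: "\<forall>t\<subseteq>s. (\<forall>w\<in>t. d = fint M w c []) \<longrightarrow> t = {}"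
    show "\<forall>w\<in>s. d \<noteq> fint M w c []"
    proof (intro ballI notI)
      fix w assume "w \<in> s" "d = fint M w c []"
      then show False using H[rule_format, of "{w}"] by auto
    qed
  qed auto
  then show ?thesis by (simp add: Neq_def Neg_def)
qed

lemma dep_supp:
  assumes "domain M \<noteq> {}" "\<forall>w\<in>s. fint M w a [] \<in> domain M" "\<forall>w\<in>s. fint M w b [] \<in> domain M"
  shows "support M (dep (Fn a []) (Fn b [])) s g \<longleftrightarrow>
    (\<forall>w\<in>s. \<forall>w'\<in>s. fint M w a [] = fint M w' a [] \<longrightarrow> fint M w b [] = fint M w' b [])"
proof
  assume H: "support M (dep (Fn a []) (Fn b [])) s g"
  show "\<forall>w\<in>s. \<forall>w'\<in>s. fint M w a [] = fint M w' a [] \<longrightarrow> fint M w b [] = fint M w' b []"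
  proof (intro ballI impI)
    fix w w' assume w: "w \<in> s" "w' \<in> s" "fint M w a [] = fint M w' a []"
    have "support M (lam (Fn a [])) {w, w'} g"
      unfolding lam_supp using w assms(2) by auto
    then have "support M (lam (Fn b [])) {w, w'} g"
      using H w unfolding dep_def by simp
    then show "fint M w b [] = fint M w' b []"
      unfolding lam_supp by auto
  qed
next
  assume H: "\<forall>w\<in>s. \<forall>w'\<in>s. fint M w a [] = fint M w' a [] \<longrightarrow> fint M w b [] = fint M w' b []"
  show "support M (dep (Fn a []) (Fn b [])) s g"
    unfolding dep_def support.simps lam_supp
  proof (intro allI impI)
    fix t assume t: "t \<subseteq> s" "\<exists>d\<in>domain M. \<forall>w\<in>t. d = fint M w a []"
    show "\<exists>d\<in>domain M. \<forall>w\<in>t. d = fint M w b []"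
    proof (cases "t = {}")
      case True then show ?thesis using assms(1) by auto
    next
      case False
      then obtain w0 where w0: "w0 \<in> t" by auto
      show ?thesis
      proof (intro bexI ballI)
        show "fint M w0 b [] \<in> domain M" using assms(3) t(1) w0 by auto
        fix w assume "w \<in> t"
        from t(2) obtain d where d: "\<forall>w\<in>t. d = fint M w a []" by blast
        have "fint M w0 a [] = fint M w a []" using d w0 \<open>w \<in> t\<close> by metis
        moreover have "w0 \<in> s" "w \<in> s" using t(1) w0 \<open>w \<in> t\<close> by auto
        ultimately show "fint M w0 b [] = fint M w b []" using H by blast
      qed
    qed
  qed
qed

theorem mainTheorem1:
  fixes S :: "('p, 'f) signature" and M :: "('w, 'd, 'p, 'f) model" and a b :: 'f
  assumes "farity S a = 0" and "farity S b = 0"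
    and "\<not> rigid S a" and "\<not> rigid S b" and "a \<noteq> b"
    and "is_idmodel S M"
    and "full M a b"
  shows "models M (eta a b :: ('p, 'f) form) \<longleftrightarrow> finite (domain M)"
proof -
  define A where "A w = fint M w a []" for w
  define B where "B w = fint M w b []" for w
  define D where "D = domain M"
  have Dne: "D \<noteq> {}" and Wne: "worlds M \<noteq> {}" using assms(6) unfolding is_idmodel_def D_def by auto
  have AD: "A w \<in> D" and BD: "B w \<in> D" if "w \<in> worlds M" for w
    using assms(1,2,6) that unfolding is_idmodel_def A_def B_def D_def by auto
  have full: "{(A w, B w) | w. w \<in> worlds M} = D \<times> D"
    using assms(7) unfolding full_def A_def B_def D_def .
  have key: "support M (eta a b) s g \<longleftrightarrow>
     (\<forall>t\<subseteq>s. (\<forall>w\<in>t. \<forall>w'\<in>t. A w = A w' \<longrightarrow> B w = B w') \<and>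
        (\<forall>w\<in>t. \<forall>w'\<in>t. B w = B w' \<longrightarrow> A w = A w') \<and>
        (\<exists>d\<in>D. \<forall>w\<in>t. d \<noteq> B w) \<longrightarrow> (\<exists>d\<in>D. \<forall>w\<in>t. d \<noteq> A w))"
    if "s \<subseteq> worlds M" for s g
  proof -
    have "support M (dep (Fn a []) (Fn b [])) t g \<longleftrightarrow> (\<forall>w\<in>t. \<forall>w'\<in>t. A w = A w' \<longrightarrow> B w = B w')"
      "support M (dep (Fn b []) (Fn a [])) t g \<longleftrightarrow> (\<forall>w\<in>t. \<forall>w'\<in>t. B w = B w' \<longrightarrow> A w = A w')"
      if "t \<subseteq> s" for t
      using dep_supp[of M t a b g] dep_supp[of M t b a g] AD BD Dne \<open>s \<subseteq> worlds M\<close> that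
      unfolding A_def B_def D_def by blast+
    note deps = this
    have n1: "support M (IEx 0 (Neq (Var 0) (Fn b []))) t g \<longleftrightarrow> (\<exists>d\<in>D. \<forall>w\<in>t. d \<noteq> B w)" for t
      unfolding neq_supp B_def D_def ..
    have n2: "support M (IEx 0 (Neq (Var 0) (Fn a []))) t g \<longleftrightarrow> (\<exists>d\<in>D. \<forall>w\<in>t. d \<noteq> A w)" for t
      unfolding neq_supp A_def D_def ..
    show ?thesis unfolding eta_def support.simps(6) support.simps(4) n1 n2
    proof (intro iffI allI impI)
      fix t assume H: "\<forall>t\<subseteq>s. (support M (dep (Fn a []) (Fn b [])) t g \<and> support M (dep (Fn b []) (Fn a [])) t g) \<and>
             (\<exists>d\<in>D. \<forall>w\<in>t. d \<noteq> B w) \<longrightarrow> (\<exists>d\<in>D. \<forall>w\<in>t. d \<noteq> A w)"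
        and t: "t \<subseteq> s"
        and c: "(\<forall>w\<in>t. \<forall>w'\<in>t. A w = A w' \<longrightarrow> B w = B w') \<and>
        (\<forall>w\<in>t. \<forall>w'\<in>t. B w = B w' \<longrightarrow> A w = A w') \<and> (\<exists>d\<in>D. \<forall>w\<in>t. d \<noteq> B w)"
      show "\<exists>d\<in>D. \<forall>w\<in>t. d \<noteq> A w" using H[rule_format, OF t] deps[OF t] c by blast
    next
      fix t assume H: "\<forall>t\<subseteq>s. (\<forall>w\<in>t. \<forall>w'\<in>t. A w = A w' \<longrightarrow> B w = B w') \<and>
        (\<forall>w\<in>t. \<forall>w'\<in>t. B w = B w' \<longrightarrow> A w = A w') \<and>
        (\<exists>d\<in>D. \<forall>w\<in>t. d \<noteq> B w) \<longrightarrow> (\<exists>d\<in>D. \<forall>w\<in>t. d \<noteq> A w)"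
        and t: "t \<subseteq> s"
        and c: "(support M (dep (Fn a []) (Fn b [])) t g \<and> support M (dep (Fn b []) (Fn a [])) t g) \<and>
             (\<exists>d\<in>D. \<forall>w\<in>t. d \<noteq> B w)"
      show "\<exists>d\<in>D. \<forall>w\<in>t. d \<noteq> A w" using H[rule_format, OF t] deps[OF t] c by blast
    qed
  qed
  show ?thesis
  proof
    assume m: "models M (eta a b)"
    show "finite (domain M)"
    proof (rule ccontr)
      assume "infinite (domain M)"
      then have "infinite D" unfolding D_def .
      then obtain B' where B': "B' \<subset> D" "D \<approx> B'" using infinite_iff_psubset[THEN iffD1] by metis
      then obtain f where f: "bij_betw f D B'" unfolding eqpoll_def by blast
      obtain d0 where d0: "d0 \<in> D" using Dne by auto
      have g: "range (\<lambda>_. d0) \<subseteq> domain M" using d0 unfolding D_def by auto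
      define s where "s = {w \<in> worlds M. B w = f (A w)}"
      have sW: "s \<subseteq> worlds M" unfolding s_def by auto
      have ex: "\<exists>w\<in>s. A w = d" if "d \<in> D" for d
      proof -
        have "f d \<in> D" using f B' that unfolding bij_betw_def by auto
        then have "(d, f d) \<in> {(A w, B w) | w. w \<in> worlds M}" using full that by auto
        then show ?thesis unfolding s_def by auto
      qed
      have sup: "support M (eta a b) (worlds M) (\<lambda>_. d0)" using m g unfolding models_def by blast
      have c1: "\<forall>w\<in>s. \<forall>w'\<in>s. A w = A w' \<longrightarrow> B w = B w'" unfolding s_def by auto
      have c2: "\<forall>w\<in>s. \<forall>w'\<in>s. B w = B w' \<longrightarrow> A w = A w'"
      proof (intro ballI impI)
        fix w w' assume w: "w \<in> s" "w' \<in> s" "B w = B w'"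
        then have "f (A w) = f (A w')" unfolding s_def by auto
        moreover have "A w \<in> D" "A w' \<in> D" using w sW AD by auto
        ultimately show "A w = A w'" using f unfolding bij_betw_def inj_on_def by blast
      qed
      obtain e where e: "e \<in> D" "e \<notin> B'" using B' by auto
      have c3: "\<exists>d\<in>D. \<forall>w\<in>s. d \<noteq> B w"
      proof (intro bexI[OF _ e(1)] ballI notI)
        fix w assume w: "w \<in> s" "e = B w"
        then have "f (A w) \<in> B'" using f AD sW unfolding bij_betw_def by auto
        then show False using w e unfolding s_def by auto
      qed
      note K = sup[unfolded key[OF order_refl]]
      have "\<exists>d\<in>D. \<forall>w\<in>s. d \<noteq> A w" using K[rule_format, OF sW] c1 c2 c3 by blast
      then show False using ex by blast
    qed
  next
    assume fin: "finite (domain M)"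
    show "models M (eta a b)"
      unfolding models_def
    proof (intro allI impI)
      fix g :: "nat \<Rightarrow> 'd"
      show "support M (eta a b) (worlds M) g"
        unfolding key[OF order_refl]
      proof (intro allI impI, elim conjE)
        fix t assume t: "t \<subseteq> worlds M"
          and c1: "\<forall>w\<in>t. \<forall>w'\<in>t. A w = A w' \<longrightarrow> B w = B w'"
          and c2: "\<forall>w\<in>t. \<forall>w'\<in>t. B w = B w' \<longrightarrow> A w = A w'"
          and c3: "\<exists>d\<in>D. \<forall>w\<in>t. d \<noteq> B w"
        show "\<exists>d\<in>D. \<forall>w\<in>t. d \<noteq> A w"
        proof (rule ccontr)
          assume "\<not> ?thesis"
          then have DA: "D \<subseteq> A ` t" by auto
          have AtD: "A ` t \<subseteq> D" "B ` t \<subseteq> D" using t AD BD by auto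
          define R where "R = (\<lambda>w. (A w, B w)) ` t"
          have "inj_on fst R"
          proof (rule inj_onI)
            fix x y assume "x \<in> R" "y \<in> R" "fst x = fst y"
            then obtain w w' where "w \<in> t" "w' \<in> t" "x = (A w, B w)" "y = (A w', B w')"
              unfolding R_def by blast
            moreover have "A w = A w'" using \<open>fst x = fst y\<close> calculation by simp
            moreover have "B w = B w'" using c1 calculation by blast
            ultimately show "x = y" by simp
          qed
          then have "card (fst ` R) = card R" by (rule card_image)
          moreover have "inj_on snd R"
          proof (rule inj_onI)
            fix x y assume "x \<in> R" "y \<in> R" "snd x = snd y"
            then obtain w w' where "w \<in> t" "w' \<in> t" "x = (A w, B w)" "y = (A w', B w')"
              unfolding R_def by blast
            moreover have "B w = B w'" using \<open>snd x = snd y\<close> calculation by simp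
            moreover have "A w = A w'" using c2 calculation by blast
            ultimately show "x = y" by simp
          qed
          then have "card (snd ` R) = card R" by (rule card_image)
          moreover have "fst ` R = A ` t" "snd ` R = B ` t" unfolding R_def image_image by simp_all
          moreover have "A ` t = D" using DA AtD(1) by (rule subset_antisym[rotated])
          ultimately have "card (B ` t) = card D" by simp
          moreover have "finite D" using fin unfolding D_def .
          ultimately have "B ` t = D" using AtD card_subset_eq by blast
          then show False using c3 by auto
        qed
      qed
    qed
  qed
qed

end
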